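(* Let $n,m\in\mathbb{N}$, let $\mathcal{Y}\subset\mathbb{R}^m$ be nonempty, convex and compact, and let $f:2^{[n]}\times\mathbb{R}^m\to\mathbb{R}$ be such that $f(\cdot,y)$ is submodular for every $y$ and $f(S,\cdot)$ is concave and continuous for every $S\subset[n]$. Let $f^L$ be the Lovász extension of $f$ with respect to the first variable and let $\zeta(x)=\max_{y\in\mathcal{Y}}f^L(x,y)$ for $x\in[0,1]^n$. Suppose at least one of the following holds: (i) $\zeta$ is the Lovász extension of some submodular function $g:2^{[n]}\to\mathbb{R}$; (ii) the set of minimisers of $\zeta$ over $[0,1]^n$ contains a point of $\{0,1\}^n$; (iii) there exists $\bar x\in\{0,1\}^n$ such that $\bar x$ minimises $f^L(\cdot,y)$ over $[0,1]^n$ for every $y\in\mathcal{Y}$. Then $\min_{x\in[0,1]^n}\max_{y\in\mathcal{Y}}f^L(x,y)=\min_{x\in\{0,1\}^n}\max_{y\in\mathcal{Y}}f^L(x,y)$, and $f$ admits a saddle point on $2^{[n]}\times\mathcal{Y}$.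
   Context: $[n]=\{1,\dots,n\}$; subsets $S\subset[n]$ are identified with their indicator vectors in $\{0,1\}^n$. A set function $g:2^{[n]}\to\mathbb{R}$ is submodular if $g(S)+g(T)\ge g(S\cap T)+g(S\cup T)$ for all $S,T\subset[n]$. Lovász extension: for $g:2^{[n]}\to\mathbb{R}$ and $x\in[0,1]^n$, choose a permutation $(j_1,\dots,j_n)$ of $[n]$ with $x_{j_1}\ge\dots\ge x_{j_n}$ and set $g^L(x)=(1-x_{j_1})\,g(\emptyset)+\sum_{k=1}^{n-1}(x_{j_k}-x_{j_{k+1}})\,g(\{j_1,\dots,j_k\})+x_{j_n}\,g([n])$. For $f:2^{[n]}\times\mathbb{R}^m\to\mathbb{R}$, the Lovász extension with respect to the first variable is $f^L(x,y):=(f(\cdot,y))^L(x)$. A saddle point of $f$ on $2^{[n]}\times\mathcal{Y}$ is a pair $(S^*,y^* )$ with $f(S^*,y)\le f(S^*,y^* )\le f(S,y^* )$ for all $S\subset[n]$, $y\in\mathcal{Y}$. *)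

theory Defs
  imports "HOL-Analysis.Analysis" "HOL-Combinatorics.Permutations"
begin

text \<open>Ground set [n] = {1..n}; subsets S of [n] are identified with indicator
vectors; points of [0,1]^n are functions nat => real that lie in [0,1] on {1..n}
and vanish outside {1..n}.\<close>

definition submodular :: "nat \<Rightarrow> (nat set \<Rightarrow> real) \<Rightarrow> bool" where
  "submodular n g \<longleftrightarrow>
     (\<forall>S T. S \<subseteq> {1..n} \<longrightarrow> T \<subseteq> {1..n} \<longrightarrow> g S + g T \<ge> g (S \<inter> T) + g (S \<union> T))"

definition unit_cube :: "nat \<Rightarrow> (nat \<Rightarrow> real) set" where
  "unit_cube n = {x. (\<forall>i\<in>{1..n}. 0 \<le> x i \<and> x i \<le> 1) \<and> (\<forall>i. i \<notin> {1..n} \<longrightarrow> x i = 0)}"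

definition ind_vec :: "nat set \<Rightarrow> nat \<Rightarrow> real" where
  "ind_vec S = (\<lambda>i. if i \<in> S then 1 else 0)"

definition sort_perm :: "nat \<Rightarrow> (nat \<Rightarrow> real) \<Rightarrow> nat \<Rightarrow> nat" where
  "sort_perm n x = (SOME p. p permutes {1..n} \<and> (\<forall>k\<in>{1..<n}. x (p (Suc k)) \<le> x (p k)))"

definition lovasz :: "nat \<Rightarrow> (nat set \<Rightarrow> real) \<Rightarrow> (nat \<Rightarrow> real) \<Rightarrow> real" where
  "lovasz n g x =
     (if n = 0 then g {} else
      (let j = sort_perm n x in
        (1 - x (j 1)) * g {}
        + (\<Sum>k\<in>{1..<n}. (x (j k) - x (j (Suc k))) * g (j ` {1..k}))
        + x (j n) * g {1..n}))"

end

theory Submission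
  imports Defs
begin


lemma sort_perm_exists:
  "\<exists>p. p permutes {1..n} \<and> (\<forall>k\<in>{1..<n}. x (p (Suc k)) \<le> (x::nat\<Rightarrow>real) (p k))"
proof -
  define L where "L = sort_key (\<lambda>i. - x i) [1..<Suc n]"
  have dL: "distinct L" and sL: "set L = {1..n}" and lL: "length L = n"
    and so: "sorted (map (\<lambda>i. - x i) L)"
    by (auto simp: L_def)
  define p where "p k = (if k \<in> {1..n} then L ! (k - 1) else k)" for k
  have "bij_betw p {1..n} {1..n}"
  proof -
    have "bij_betw (\<lambda>k. L ! (k - 1)) {1..n} {1..n}"
    proof (rule bij_betw_imageI)
      show "inj_on (\<lambda>k. L ! (k - 1)) {1..n}"
        using dL lL by (auto simp: inj_on_def nth_eq_iff_index_eq)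
      show "(\<lambda>k. L ! (k - 1)) ` {1..n} = {1..n}"
      proof
        show "(\<lambda>k. L ! (k - 1)) ` {1..n} \<subseteq> {1..n}"
        proof
          fix i assume "i \<in> (\<lambda>k. L ! (k - 1)) ` {1..n}"
          then obtain k where "k \<in> {1..n}" "i = L ! (k - 1)" by auto
          then have "i \<in> set L" using lL by auto
          then show "i \<in> {1..n}" using sL by auto
        qed
        show "{1..n} \<subseteq> (\<lambda>k. L ! (k - 1)) ` {1..n}"
        proof
          fix i assume "i \<in> {1..n}"
          then obtain k where k: "k < n" "L ! k = i" using sL lL by (metis in_set_conv_nth)
          then show "i \<in> (\<lambda>k. L ! (k - 1)) ` {1..n}"
            by (intro image_eqI[of _ _ "Suc k"]) auto
        qed
      qed
    qed
    then show ?thesis by (rule bij_betw_cong[THEN iffD1, rotated]) (auto simp: p_def)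
  qed
  then have "p permutes {1..n}" by (rule bij_imp_permutes) (auto simp: p_def)
  moreover have "\<forall>k\<in>{1..<n}. x (p (Suc k)) \<le> x (p k)"
  proof
    fix k assume k: "k \<in> {1..<n}"
    have "map (\<lambda>i. - x i) L ! (k - 1) \<le> map (\<lambda>i. - x i) L ! k"
      using so k lL by (intro sorted_nth_mono) auto
    then show "x (p (Suc k)) \<le> x (p k)" using k lL by (auto simp: p_def)
  qed
  ultimately show ?thesis by blast
qed

lemma sort_perm_props:
  "sort_perm n x permutes {1..n}" "\<forall>k\<in>{1..<n}. x (sort_perm n x (Suc k)) \<le> x (sort_perm n x k)"
proof -
  have "sort_perm n x permutes {1..n} \<and> (\<forall>k\<in>{1..<n}. x (sort_perm n x (Suc k)) \<le> x (sort_perm n x k))"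
    unfolding sort_perm_def
    by (rule someI_ex[where P="\<lambda>p. p permutes {1..n} \<and> (\<forall>k\<in>{1..<n}. x (p (Suc k)) \<le> x (p k))", OF sort_perm_exists])
  then show "sort_perm n x permutes {1..n}" "\<forall>k\<in>{1..<n}. x (sort_perm n x (Suc k)) \<le> x (sort_perm n x k)"
    by auto
qed

lemma lov_identity:
  fixes a G :: "nat \<Rightarrow> real"
  shows "n \<ge> 1 \<Longrightarrow> (1 - a 1) * G 0 + (\<Sum>k\<in>{1..<n}. (a k - a (Suc k)) * G k) + a n * G n
     = G 0 + (\<Sum>m<n. a (Suc m) * (G (Suc m) - G m))"
proof (induction n)
  case 0 then show ?case by simp
next
  case (Suc n)
  show ?case
  proof (cases "n = 0")
    case True then show ?thesis by (simp add: algebra_simps)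
  next
    case False
    then have IH: "(1 - a 1) * G 0 + (\<Sum>k\<in>{1..<n}. (a k - a (Suc k)) * G k) + a n * G n
     = G 0 + (\<Sum>m<n. a (Suc m) * (G (Suc m) - G m))" using Suc by simp
    have "(\<Sum>k\<in>{1..<Suc n}. (a k - a (Suc k)) * G k) = (\<Sum>k\<in>{1..<n}. (a k - a (Suc k)) * G k) + (a n - a (Suc n)) * G n"
      using False by (simp add: sum.atLeastLessThan_Suc)
    then show ?thesis using IH by (simp add: algebra_simps)
  qed
qed

lemma perm_img_sub: fixes n k :: nat assumes "p permutes {1..n}" "k \<le> n" shows "p ` {1..k} \<subseteq> {1..n}"
proof
  fix y assume "y \<in> p ` {1..k}"
  then obtain i where i: "i \<in> {1..k}" "y = p i" by auto
  then have "i \<in> {1..n}" using assms(2) by auto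
  then show "y \<in> {1..n}" using permutes_in_image[OF assms(1)] i by auto
qed

lemma lovasz_repr:
  "lovasz n g x = g {} + (\<Sum>m<n. x (sort_perm n x (Suc m)) *
      (g (sort_perm n x ` {1..Suc m}) - g (sort_perm n x ` {1..m})))"
proof (cases "n = 0")
  case True then show ?thesis by (simp add: lovasz_def)
next
  case False
  define j where "j = sort_perm n x"
  have jp: "j permutes {1..n}" unfolding j_def by (rule sort_perm_props)
  have Gn: "g (j ` {1..n}) = g {1..n}" using permutes_image[OF jp] by simp
  have "lovasz n g x = (1 - x (j 1)) * g {} + (\<Sum>k\<in>{1..<n}. (x (j k) - x (j (Suc k))) * g (j ` {1..k})) + x (j n) * g {1..n}"
    using False unfolding lovasz_def j_def Let_def by simp
  also have "\<dots> = (1 - x (j 1)) * g (j ` {1..0}) + (\<Sum>k\<in>{1..<n}. (x (j k) - x (j (Suc k))) * g (j ` {1..k})) + x (j n) * g (j ` {1..n})"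
    using Gn by simp
  also have "\<dots> = g (j ` {1..0}) + (\<Sum>m<n. x (j (Suc m)) * (g (j ` {1..Suc m}) - g (j ` {1..m})))"
    using lov_identity[of n "\<lambda>k. x (j k)" "\<lambda>k. g (j ` {1..k})"] False by simp
  finally show ?thesis unfolding j_def by simp
qed

lemma greedy_le_aux:
  assumes sm: "submodular n g" and p: "p permutes {1..n}" and T: "T \<subseteq> {1..n}"
  shows "r \<le> n \<Longrightarrow> (\<Sum>m<r. ind_vec T (p (Suc m)) * (g (p ` {1..Suc m}) - g (p ` {1..m})))
     \<le> g (p ` {1..r} \<inter> T) - g {}"
proof (induction r)
  case 0 then show ?case by simp
next
  case (Suc r)
  define A where "A = p ` {1..r}"
  define a where "a = p (Suc r)"
  have ins: "p ` {1..Suc r} = insert a A" by (auto simp: A_def a_def atLeastAtMostSuc_conv)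
  have aA: "a \<notin> A"
  proof
    assume "a \<in> A"
    then obtain i where i: "i \<in> {1..r}" "p (Suc r) = p i" by (auto simp: A_def a_def)
    then have "Suc r = i" using permutes_inj[OF p] by (auto simp: inj_def)
    then show False using i by auto
  qed
  have Asub: "A \<subseteq> {1..n}" unfolding A_def using Suc.prems by (intro perm_img_sub[OF p]) auto
  have asub: "a \<in> {1..n}" using perm_img_sub[OF p Suc.prems] ins by auto
  have IH: "(\<Sum>m<r. ind_vec T (p (Suc m)) * (g (p ` {1..Suc m}) - g (p ` {1..m}))) \<le> g (A \<inter> T) - g {}"
    using Suc by (simp add: A_def)
  have step: "ind_vec T a * (g (insert a A) - g A) \<le> g (insert a A \<inter> T) - g (A \<inter> T)"
  proof (cases "a \<in> T")
    case True
    have "g A + g (insert a (A \<inter> T)) \<ge> g (A \<inter> insert a (A \<inter> T)) + g (A \<union> insert a (A \<inter> T))"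
    proof -
      have h: "insert a (A \<inter> T) \<subseteq> {1..n}" using asub Asub by auto
      show ?thesis by (rule sm[unfolded submodular_def, rule_format, OF Asub h])
    qed
    moreover have "A \<inter> insert a (A \<inter> T) = A \<inter> T" using aA by auto
    moreover have "A \<union> insert a (A \<inter> T) = insert a A" by auto
    moreover have "insert a A \<inter> T = insert a (A \<inter> T)" using True by auto
    ultimately show ?thesis using True by (simp add: ind_vec_def)
  next
    case False
    then have "insert a A \<inter> T = A \<inter> T" by auto
    then show ?thesis using False by (simp add: ind_vec_def)
  qed
  show ?case unfolding sum.lessThan_Suc ins using IH step unfolding A_def[symmetric] a_def[symmetric] by linarith
qed

lemma greedy_le:
  assumes sm: "submodular n g" and p: "p permutes {1..n}" and T: "T \<subseteq> {1..n}"
  shows "(\<Sum>m<n. ind_vec T (p (Suc m)) * (g (p ` {1..Suc m}) - g (p ` {1..m}))) \<le> g T - g {}"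
proof -
  have "p ` {1..n} \<inter> T = T" using permutes_image[OF p] T by auto
  then show ?thesis using greedy_le_aux[OF assms, of n] by simp
qed

lemma sorted_mono:
  fixes x :: "nat \<Rightarrow> real"
  assumes so: "\<forall>k\<in>{1..<n}. x (p (Suc k)) \<le> x (p k)" and "1 \<le> k'" "k' \<le> k" "k \<le> n"
  shows "x (p k) \<le> x (p k')"
  using assms(3,4)
proof (induction k rule: dec_induct)
  case base then show ?case by simp
next
  case (step m)
  then have "m \<in> {1..<n}" using assms(2) by auto
  then have "x (p (Suc m)) \<le> x (p m)" using so by blast
  then show ?case using step by simp
qed

lemma lovasz_ind:
  assumes S: "S \<subseteq> {1..n}"
  shows "lovasz n g (ind_vec S) = g S"
proof -
  define x where "x = ind_vec S"
  define j where "j = sort_perm n x"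
  have jp: "j permutes {1..n}" unfolding j_def by (rule sort_perm_props)
  have so: "\<forall>k\<in>{1..<n}. x (j (Suc k)) \<le> x (j k)" unfolding j_def by (rule sort_perm_props)
  define K where "K = {k\<in>{1..n}. j k \<in> S}"
  define c where "c = card K"
  have xv: "x i = (if i \<in> S then 1 else 0)" for i by (simp add: x_def ind_vec_def)
  have down: "k' \<in> K" if "k \<in> K" "k' \<in> {1..k}" for k k'
  proof -
    have "x (j k) \<le> x (j k')" using sorted_mono[of n x j k' k, OF so] that by (auto simp: K_def)
    then show ?thesis using that by (auto simp: K_def xv split: if_splits)
  qed
  have Ksub: "K \<subseteq> {1..n}" by (auto simp: K_def)
  have key: "j k \<in> S \<longleftrightarrow> k \<le> c" if k: "k \<in> {1..n}" for k
  proof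
    assume "j k \<in> S"
    then have "k \<in> K" using k by (auto simp: K_def)
    then have "{1..k} \<subseteq> K" using down by blast
    then have "card {1..k} \<le> c" unfolding c_def using Ksub by (intro card_mono) (auto intro: finite_subset)
    then show "k \<le> c" by simp
  next
    assume kc: "k \<le> c"
    show "j k \<in> S"
    proof (rule ccontr)
      assume "j k \<notin> S"
      then have "k \<notin> K" by (auto simp: K_def)
      then have "K \<subseteq> {1..k - 1}"
      proof -
        { fix k'' assume k'': "k'' \<in> K"
          have "k'' < k"
          proof (rule ccontr)
            assume "\<not> k'' < k"
            then have "k \<in> K" using down[OF k''] k by auto
            then show False using \<open>k \<notin> K\<close> by simp
          qed
          then have "k'' \<in> {1..k - 1}" using k'' Ksub by auto }
        then show ?thesis by blast
      qed
      then have "c \<le> card {1..k - 1}" unfolding c_def by (intro card_mono) auto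
      then show False using kc k by auto
    qed
  qed
  have cn: "c \<le> n" unfolding c_def using card_mono[OF _ Ksub] by simp
  have Keq: "K = {1..c}" using key cn by (auto simp: K_def)
  have jK: "j ` K = S"
  proof
    show "j ` K \<subseteq> S" by (auto simp: K_def)
    show "S \<subseteq> j ` K"
    proof
      fix s assume s: "s \<in> S"
      then have "s \<in> j ` {1..n}" using S permutes_image[OF jp] by auto
      then obtain k where "k \<in> {1..n}" "s = j k" by auto
      then show "s \<in> j ` K" using s by (auto simp: K_def)
    qed
  qed
  define G where "G k = g (j ` {1..k})" for k
  have "lovasz n g x = g {} + (\<Sum>m<n. x (j (Suc m)) * (G (Suc m) - G m))"
    unfolding lovasz_repr G_def j_def by simp
  also have "(\<Sum>m<n. x (j (Suc m)) * (G (Suc m) - G m)) = (\<Sum>m<n. if m < c then G (Suc m) - G m else 0)"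
  proof (rule sum.cong)
    fix m assume "m \<in> {..<n}"
    then have "Suc m \<in> {1..n}" by auto
    then show "x (j (Suc m)) * (G (Suc m) - G m) = (if m < c then G (Suc m) - G m else 0)"
      using key[of "Suc m"] by (auto simp: xv)
  qed simp
  also have "\<dots> = (\<Sum>m\<in>{..<n} \<inter> {m. m < c}. G (Suc m) - G m)"
    by (simp add: sum.inter_restrict)
  also have "{..<n} \<inter> {m. m < c} = {..<c}" using cn by auto
  also have "(\<Sum>m<c. G (Suc m) - G m) = G c - G 0" by (rule sum_lessThan_telescope)
  also have "G c = g S" unfolding G_def using Keq jK by simp
  also have "G 0 = g {}" unfolding G_def by simp
  finally show ?thesis unfolding x_def by simp
qed

lemma lovasz_ge:
  assumes x: "x \<in> unit_cube n" and g0: "\<And>T. T \<subseteq> {1..n} \<Longrightarrow> g0 \<le> g T"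
  shows "g0 \<le> lovasz n g x"
proof (cases "n = 0")
  case True then show ?thesis using g0[of "{}"] by (simp add: lovasz_def)
next
  case False
  define j where "j = sort_perm n x"
  have jp: "j permutes {1..n}" unfolding j_def by (rule sort_perm_props)
  have so: "\<forall>k\<in>{1..<n}. x (j (Suc k)) \<le> x (j k)" unfolding j_def by (rule sort_perm_props)
  have xr: "0 \<le> x (j k) \<and> x (j k) \<le> 1" if "k \<in> {1..n}" for k
  proof -
    have "j k \<in> {1..n}" using permutes_in_image[OF jp] that by simp
    then show ?thesis using x by (auto simp: unit_cube_def)
  qed
  have Gk: "g0 \<le> g (j ` {1..k})" if "k \<le> n" for k using g0 perm_img_sub[OF jp that] by blast
  have L: "lovasz n g x = (1 - x (j 1)) * g {} + (\<Sum>k\<in>{1..<n}. (x (j k) - x (j (Suc k))) * g (j ` {1..k})) + x (j n) * g {1..n}"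
    using False unfolding lovasz_def j_def Let_def by simp
  have C: "(1 - x (j 1)) * g0 + (\<Sum>k\<in>{1..<n}. (x (j k) - x (j (Suc k))) * g0) + x (j n) * g0 = g0"
    using lov_identity[of n "\<lambda>k. x (j k)" "\<lambda>k. g0"] False by simp
  have "(1 - x (j 1)) * g0 \<le> (1 - x (j 1)) * g {}"
    using xr[of 1] False g0[of "{}"] by (intro mult_left_mono) auto
  moreover have "(\<Sum>k\<in>{1..<n}. (x (j k) - x (j (Suc k))) * g0) \<le> (\<Sum>k\<in>{1..<n}. (x (j k) - x (j (Suc k))) * g (j ` {1..k}))"
    using so Gk by (intro sum_mono mult_left_mono) auto
  moreover have "x (j n) * g0 \<le> x (j n) * g {1..n}"
    using xr[of n] False g0[of "{1..n}"] by (intro mult_left_mono) auto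
  ultimately show ?thesis using L C by linarith
qed

lemma lovasz_cont:
  assumes "\<And>S. S \<subseteq> {1..n} \<Longrightarrow> continuous_on UNIV (f S)"
  shows "continuous_on UNIV (\<lambda>y. lovasz n (\<lambda>S. f S y) x)"
proof -
  define j where "j = sort_perm n x"
  have jp: "j permutes {1..n}" unfolding j_def by (rule sort_perm_props)
  have c: "continuous_on UNIV (f (j ` {1..k}))" if "k \<le> n" for k
    using assms perm_img_sub[OF jp that] by blast
  show ?thesis unfolding lovasz_repr j_def[symmetric]
    using c assms[of "{}"]
    by (intro continuous_on_add continuous_on_sum continuous_on_mult continuous_on_const continuous_on_diff) auto
qed



lemma concave_on_sub: "concave_on T f \<Longrightarrow> S \<subseteq> T \<Longrightarrow> convex S \<Longrightarrow> concave_on S f"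
  unfolding concave_on_def by (rule convex_on_subset)

lemma two_fun:
  fixes Y :: "'b::real_normed_vector set" and k h :: "'b \<Rightarrow> real"
  assumes Yc: "compact Y" and Yv: "convex Y" and Yne: "Y \<noteq> {}"
    and kc: "concave_on Y k" and hc: "concave_on Y h"
    and kcont: "continuous_on Y k" and hcont: "continuous_on Y h"
    and neg: "\<forall>y\<in>Y. k y < 0 \<or> h y < 0"
  shows "\<exists>t\<in>{0..1}. \<forall>y\<in>Y. (1 - t) * k y + t * h y < 0"
proof -
  have "continuous_on Y (\<lambda>y. min (k y) (h y))" using kcont hcont by (intro continuous_on_min)
  from continuous_attains_sup[OF Yc Yne this] obtain y0
    where y0: "y0 \<in> Y" "\<forall>y\<in>Y. min (k y) (h y) \<le> min (k y0) (h y0)" by blast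
  define c where "c = min (k y0) (h y0)"
  have c0: "c < 0" using neg y0 by (auto simp: c_def)
  define Z :: "(real \<times> real) set" where "Z = {z. \<exists>y\<in>Y. fst z \<le> k y - c/2 \<and> snd z \<le> h y - c/2}"
  have kI: "k (u *\<^sub>R y1 + v *\<^sub>R y2) \<ge> u * k y1 + v * k y2"
    if "y1 \<in> Y" "y2 \<in> Y" "u \<ge> 0" "v \<ge> 0" "u + v = 1" for y1 y2 u v
    using kc that unfolding concave_on_iff by blast
  have hI: "h (u *\<^sub>R y1 + v *\<^sub>R y2) \<ge> u * h y1 + v * h y2"
    if "y1 \<in> Y" "y2 \<in> Y" "u \<ge> 0" "v \<ge> 0" "u + v = 1" for y1 y2 u v
    using hc that unfolding concave_on_iff by blast
  have "convex Z"
    unfolding convex_def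
  proof (intro ballI allI impI)
    fix z1 z2 :: "real \<times> real" and u v :: real
    assume z1: "z1 \<in> Z" and z2: "z2 \<in> Z" and uv: "0 \<le> u" "0 \<le> v" "u + v = 1"
    obtain y1 where y1: "y1 \<in> Y" "fst z1 \<le> k y1 - c/2" "snd z1 \<le> h y1 - c/2" using z1 by (auto simp: Z_def)
    obtain y2 where y2: "y2 \<in> Y" "fst z2 \<le> k y2 - c/2" "snd z2 \<le> h y2 - c/2" using z2 by (auto simp: Z_def)
    define y where "y = u *\<^sub>R y1 + v *\<^sub>R y2"
    have yY: "y \<in> Y" using Yv y1 y2 uv unfolding y_def convex_def by blast
    have 1: "u * fst z1 \<le> u * (k y1 - c/2)" using uv y1 by (intro mult_left_mono) auto
    have 2: "v * fst z2 \<le> v * (k y2 - c/2)" using uv y2 by (intro mult_left_mono) auto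
    have 3: "u * snd z1 \<le> u * (h y1 - c/2)" using uv y1 by (intro mult_left_mono) auto
    have 4: "v * snd z2 \<le> v * (h y2 - c/2)" using uv y2 by (intro mult_left_mono) auto
    have 5: "k y \<ge> u * k y1 + v * k y2" unfolding y_def using kI y1 y2 uv by blast
    have 6: "h y \<ge> u * h y1 + v * h y2" unfolding y_def using hI y1 y2 uv by blast
    have "u * (k y1 - c/2) + v * (k y2 - c/2) = u * k y1 + v * k y2 - (u+v)*(c/2)"
      "u * (h y1 - c/2) + v * (h y2 - c/2) = u * h y1 + v * h y2 - (u+v)*(c/2)"
      by (simp_all add: algebra_simps)
    then have e: "u * (k y1 - c/2) + v * (k y2 - c/2) = u * k y1 + v * k y2 - c/2"
      "u * (h y1 - c/2) + v * (h y2 - c/2) = u * h y1 + v * h y2 - c/2"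
      using uv(3) by simp_all
    show "u *\<^sub>R z1 + v *\<^sub>R z2 \<in> Z"
    proof -
      have f1: "fst (u *\<^sub>R z1 + v *\<^sub>R z2) \<le> k y - c/2"
        using 1 2 5 e(1) by (simp del: times_divide_eq_right)
      have f2: "snd (u *\<^sub>R z1 + v *\<^sub>R z2) \<le> h y - c/2"
        using 3 4 6 e(2) by (simp del: times_divide_eq_right)
      show ?thesis unfolding Z_def using yY f1 f2 by blast
    qed
  qed
  moreover have "(0::real\<times>real) \<notin> Z"
  proof
    assume "(0::real\<times>real) \<in> Z"
    then obtain y where y: "y \<in> Y" "0 \<le> k y - c/2" "0 \<le> h y - c/2" by (auto simp: Z_def)
    then have "min (k y) (h y) \<le> c" using y0 by (auto simp: c_def)
    then show False using y c0 by auto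
  qed
  ultimately obtain a where a: "a \<noteq> 0" "\<forall>z\<in>Z. 0 \<le> inner a z"
    using separating_hyperplane_set_0 by blast
  define a1 where "a1 = fst a"
  define a2 where "a2 = snd a"
  have ia: "inner a z = a1 * fst z + a2 * snd z" for z
    unfolding a1_def a2_def by (cases a, cases z) simp
  have a1: "a1 \<le> 0"
  proof (rule ccontr)
    assume "\<not> a1 \<le> 0"
    then have pos: "a1 > 0" by simp
    define s where "s = (\<bar>a1 * (k y0 - c/2) + a2 * (h y0 - c/2)\<bar> + 1) / a1"
    have "(k y0 - c/2 - s, h y0 - c/2) \<in> Z"
      unfolding Z_def using y0 pos s_def by (auto intro!: bexI[of _ y0])
    then have "0 \<le> a1 * (k y0 - c/2 - s) + a2 * (h y0 - c/2)" using a ia by force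
    moreover have "a1 * s = \<bar>a1 * (k y0 - c/2) + a2 * (h y0 - c/2)\<bar> + 1" using pos unfolding s_def by simp
    ultimately show False by (simp add: algebra_simps abs_if split: if_splits)
  qed
  have a2: "a2 \<le> 0"
  proof (rule ccontr)
    assume "\<not> a2 \<le> 0"
    then have pos: "a2 > 0" by simp
    define s where "s = (\<bar>a1 * (k y0 - c/2) + a2 * (h y0 - c/2)\<bar> + 1) / a2"
    have "(k y0 - c/2, h y0 - c/2 - s) \<in> Z"
      unfolding Z_def using y0 pos s_def by (auto intro!: bexI[of _ y0])
    then have "0 \<le> a1 * (k y0 - c/2) + a2 * (h y0 - c/2 - s)" using a ia by force
    moreover have "a2 * s = \<bar>a1 * (k y0 - c/2) + a2 * (h y0 - c/2)\<bar> + 1" using pos unfolding s_def by simp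
    ultimately show False by (simp add: algebra_simps abs_if split: if_splits)
  qed
  have pq: "a1 + a2 < 0"
  proof -
    have "a1 \<noteq> 0 \<or> a2 \<noteq> 0" using a(1) unfolding a1_def a2_def by (cases a) (auto simp: zero_prod_def)
    then show ?thesis using a1 a2 by linarith
  qed
  define t where "t = a2 / (a1 + a2)"
  have t01: "t \<in> {0..1}" using a1 a2 pq unfolding t_def by (auto simp: field_simps)
  have "(1 - t) * k y + t * h y < 0" if y: "y \<in> Y" for y
  proof -
    have "(k y - c/2, h y - c/2) \<in> Z" unfolding Z_def using y by auto
    then have "0 \<le> a1 * (k y - c/2) + a2 * (h y - c/2)" using a ia by force
    then have i: "-(a1 * k y + a2 * h y) \<le> -(a1 + a2) * c / 2" by (simp add: algebra_simps)
    have "-(a1 + a2) * c / 2 < 0" using pq c0 by (simp add: mult_pos_neg)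
    then have "-(a1 * k y + a2 * h y) < 0" using i by linarith
    moreover have "(1 - t) * k y + t * h y = (a1 * k y + a2 * h y) / (a1 + a2)"
    proof -
      have "1 - t = a1 / (a1 + a2)" using pq unfolding t_def by (simp add: field_simps)
      then show ?thesis unfolding t_def by (simp add: add_divide_distrib)
    qed
    ultimately show ?thesis using pq by (simp add: divide_pos_neg)
  qed
  then show ?thesis using t01 by blast
qed

lemma GL:
  fixes Y :: "'b::real_normed_vector set" and F :: "('c \<Rightarrow> real) \<Rightarrow> 'b \<Rightarrow> real"
  assumes "finite A"
  shows "compact Y \<Longrightarrow> convex Y \<Longrightarrow> Y \<noteq> {} \<Longrightarrow> A \<subseteq> X \<Longrightarrow> (\<forall>y\<in>Y. \<exists>a\<in>A. F a y < 0)
    \<Longrightarrow> (\<forall>a\<in>X. concave_on UNIV (F a) \<and> continuous_on UNIV (F a))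
    \<Longrightarrow> (\<forall>a\<in>X. \<forall>b\<in>X. \<forall>t\<in>{0..1}. (\<lambda>i. (1-t) * a i + t * b i) \<in> X)
    \<Longrightarrow> (\<forall>a\<in>X. \<forall>b\<in>X. \<forall>t\<in>{0..1}. \<forall>y. F (\<lambda>i. (1-t) * a i + t * b i) y \<le> (1-t) * F a y + t * F b y)
    \<Longrightarrow> \<exists>x\<in>X. \<forall>y\<in>Y. F x y < 0"
  using assms
proof (induction A arbitrary: Y rule: finite_induct)
  case empty
  then show ?case by auto
next
  case (insert a A)
  have aX: "a \<in> X" using insert by auto
  have Fa: "concave_on UNIV (F a)" "continuous_on UNIV (F a)" using insert aX by auto
  define Y' where "Y' = Y \<inter> {y. 0 \<le> F a y}"
  show ?case
  proof (cases "Y' = {}")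
    case True
    then show ?thesis using aX unfolding Y'_def by (auto intro!: bexI[of _ a])
  next
    case False
    have cl: "closed {y. 0 \<le> F a y}" using Fa by (intro closed_Collect_le continuous_on_const) auto
    have cY': "compact Y'" unfolding Y'_def using insert.prems(1) cl by (rule compact_Int_closed)
    have cv: "convex {y. 0 \<le> F a y}"
      unfolding convex_def
    proof (intro ballI allI impI CollectI)
      fix y1 y2 :: 'b and u v :: real
      assume "y1 \<in> {y. 0 \<le> F a y}" "y2 \<in> {y. 0 \<le> F a y}" "0 \<le> u" "0 \<le> v" "u + v = 1"
      moreover have "F a (u *\<^sub>R y1 + v *\<^sub>R y2) \<ge> u * F a y1 + v * F a y2"
        using Fa(1) calculation unfolding concave_on_iff by blast
      ultimately show "0 \<le> F a (u *\<^sub>R y1 + v *\<^sub>R y2)" by (smt (verit) mem_Collect_eq mult_nonneg_nonneg)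
    qed
    have vY': "convex Y'" unfolding Y'_def using insert.prems(2) cv by (rule convex_Int)
    have "\<forall>y\<in>Y'. \<exists>a'\<in>A. F a' y < 0" using insert.prems(5) unfolding Y'_def by force
    then obtain x' where x': "x' \<in> X" "\<forall>y\<in>Y'. F x' y < 0"
      using insert.IH[OF cY' vY' False _ _ insert.prems(6-8)] insert.prems(4) by blast
    have Fx': "concave_on UNIV (F x')" "continuous_on UNIV (F x')" using insert x' by auto
    have "\<forall>y\<in>Y. F a y < 0 \<or> F x' y < 0" using x' unfolding Y'_def by force
    then obtain t where t: "t \<in> {0..1}" "\<forall>y\<in>Y. (1 - t) * F a y + t * F x' y < 0"
      using two_fun[OF insert.prems(1,2,3) concave_on_sub[OF Fa(1)] concave_on_sub[OF Fx'(1)]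
          continuous_on_subset[OF Fa(2)] continuous_on_subset[OF Fx'(2)]] insert.prems(2)
      by blast
    show ?thesis
    proof (intro bexI[of _ "\<lambda>i. (1-t) * a i + t * x' i"] ballI)
      show "(\<lambda>i. (1-t) * a i + t * x' i) \<in> X" using insert.prems(7) aX x' t by blast
      fix y assume "y \<in> Y"
      then show "F (\<lambda>i. (1-t) * a i + t * x' i) y < 0"
        using insert.prems(8) aX x'(1) t by (meson order.strict_trans1)
    qed
  qed
qed



theorem proposition2:
  fixes n :: nat
    and Y :: "(real ^ 'm) set"
    and f :: "nat set \<Rightarrow> real ^ 'm \<Rightarrow> real"
    and zeta :: "(nat \<Rightarrow> real) \<Rightarrow> real"
  assumes Y_ne: "Y \<noteq> {}" and Y_convex: "convex Y" and Y_compact: "compact Y"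
    and f_submod: "\<And>y. submodular n (\<lambda>S. f S y)"
    and f_concave: "\<And>S. S \<subseteq> {1..n} \<Longrightarrow> concave_on UNIV (f S)"
    and f_cont: "\<And>S. S \<subseteq> {1..n} \<Longrightarrow> continuous_on UNIV (f S)"
    and zeta_def: "\<And>x. zeta x = (SUP y\<in>Y. lovasz n (\<lambda>S. f S y) x)"
    and cases:
      "(\<exists>g. submodular n g \<and> (\<forall>x\<in>unit_cube n. zeta x = lovasz n g x))
       \<or> (\<exists>S. S \<subseteq> {1..n} \<and> (\<forall>x\<in>unit_cube n. zeta (ind_vec S) \<le> zeta x))
       \<or> (\<exists>S. S \<subseteq> {1..n} \<and> (\<forall>y\<in>Y. \<forall>x\<in>unit_cube n.
              lovasz n (\<lambda>T. f T y) (ind_vec S) \<le> lovasz n (\<lambda>T. f T y) x))"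
  shows "(\<exists>x\<in>unit_cube n. \<forall>x'\<in>unit_cube n. zeta x \<le> zeta x')
         \<and> (INF x\<in>unit_cube n. zeta x) = (INF S\<in>Pow {1..n}. zeta (ind_vec S))
         \<and> (\<exists>S y. S \<subseteq> {1..n} \<and> y \<in> Y \<and>
              (\<forall>y'\<in>Y. f S y' \<le> f S y) \<and> (\<forall>T. T \<subseteq> {1..n} \<longrightarrow> f S y \<le> f T y))"
proof -
  have cont: "continuous_on UNIV (\<lambda>y. lovasz n (\<lambda>S. f S y) x)" for x
    using lovasz_cont[of n f x] f_cont by blast
  have bdd: "bdd_above ((\<lambda>y. lovasz n (\<lambda>S. f S y) x) ` Y)" for x
    by (intro bounded_imp_bdd_above compact_imp_bounded compact_continuous_image
        continuous_on_subset[OF cont] Y_compact) simp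
  have ind_cube: "ind_vec T \<in> unit_cube n" if "T \<subseteq> {1..n}" for T
    using that by (auto simp: unit_cube_def ind_vec_def)
  have zind: "lovasz n (\<lambda>S. f S y) (ind_vec T) = f T y" if "T \<subseteq> {1..n}" for T y
    using lovasz_ind[OF that] by simp
  obtain S where S: "S \<subseteq> {1..n}" "\<forall>x\<in>unit_cube n. zeta (ind_vec S) \<le> zeta x"
  proof -
    consider (i) "\<exists>g. submodular n g \<and> (\<forall>x\<in>unit_cube n. zeta x = lovasz n g x)"
      | (ii) "\<exists>S. S \<subseteq> {1..n} \<and> (\<forall>x\<in>unit_cube n. zeta (ind_vec S) \<le> zeta x)"
      | (iii) "\<exists>S. S \<subseteq> {1..n} \<and> (\<forall>y\<in>Y. \<forall>x\<in>unit_cube n.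
              lovasz n (\<lambda>T. f T y) (ind_vec S) \<le> lovasz n (\<lambda>T. f T y) x)"
      using cases by blast
    then show ?thesis
    proof cases
      case i
      then obtain g where g: "\<forall>x\<in>unit_cube n. zeta x = lovasz n g x" by blast
      have fin: "finite (g ` Pow {1..n})" "g ` Pow {1..n} \<noteq> {}" by auto
      obtain S0 where S0: "S0 \<in> Pow {1..n}" "g S0 = Min (g ` Pow {1..n})"
        using Min_in[OF fin] by auto
      have S0min: "g S0 \<le> g T" if "T \<subseteq> {1..n}" for T
        using S0 Min_le[OF fin(1)] that by auto
      have "zeta (ind_vec S0) \<le> zeta x" if x: "x \<in> unit_cube n" for x
      proof -
        have "zeta (ind_vec S0) = g S0" using g ind_cube[of S0] S0 lovasz_ind[of S0 n g] by auto
        also have "\<dots> \<le> lovasz n g x" using lovasz_ge[OF x, of "g S0" g] S0min by blast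
        also have "\<dots> = zeta x" using g x by simp
        finally show ?thesis .
      qed
      then show ?thesis using that S0 by blast
    next
      case ii
      then show ?thesis using that by blast
    next
      case iii
      then obtain S where S: "S \<subseteq> {1..n}" "\<forall>y\<in>Y. \<forall>x\<in>unit_cube n.
              lovasz n (\<lambda>T. f T y) (ind_vec S) \<le> lovasz n (\<lambda>T. f T y) x" by blast
      have "zeta (ind_vec S) \<le> zeta x" if x: "x \<in> unit_cube n" for x
        unfolding zeta_def using S x Y_ne bdd[of x] by (intro cSUP_mono) auto
      then show ?thesis using that S by blast
    qed
  qed
  define v where "v = zeta (ind_vec S)"
  have v_eq: "v = (SUP y\<in>Y. f S y)" unfolding v_def zeta_def using zind[OF S(1)] by simp
  have bddS: "bdd_above (f S ` Y)" using bdd[of "ind_vec S"] zind[OF S(1)] by simp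
  have "\<exists>y\<in>Y. \<forall>T. T \<subseteq> {1..n} \<longrightarrow> v \<le> f T y"
  proof (rule ccontr)
    assume "\<not> ?thesis"
    then have neg: "\<forall>y\<in>Y. \<exists>T. T \<subseteq> {1..n} \<and> f T y < v" by (auto simp: not_le)
    define P where "P = Pow {1..n}"
    have finP: "finite P" by (simp add: P_def)
    define X where "X = {l :: nat set \<Rightarrow> real. (\<forall>T. 0 \<le> l T) \<and> (\<forall>T. T \<notin> P \<longrightarrow> l T = 0) \<and> sum l P = 1}"
    define F where "F l y = (\<Sum>T\<in>P. l T * f T y) - v" for l y
    define dl :: "nat set \<Rightarrow> nat set \<Rightarrow> real" where "dl T = (\<lambda>U. if U = T then 1 else 0::real)" for T
    define A where "A = dl ` P"
    have FA: "F (dl T) y = f T y - v" if "T \<in> P" for T y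
    proof -
      have "(\<Sum>U\<in>P. dl T U * f U y) = (\<Sum>U\<in>P. if U = T then f U y else 0)"
        by (rule sum.cong) (auto simp: dl_def)
      then show ?thesis using that finP by (simp add: F_def)
    qed
    have AX: "A \<subseteq> X"
      unfolding A_def X_def using finP by (auto simp: dl_def sum.delta)
    have hypA: "\<forall>y\<in>Y. \<exists>a\<in>A. F a y < 0"
    proof
      fix y assume "y \<in> Y"
      then obtain T where T: "T \<subseteq> {1..n}" "f T y < v" using neg by blast
      then have "T \<in> P" by (simp add: P_def)
      then show "\<exists>a\<in>A. F a y < 0" using FA T unfolding A_def by force
    qed
    have conc: "concave_on UNIV (F l) \<and> continuous_on UNIV (F l)" if l: "l \<in> X" for l
    proof
      show "continuous_on UNIV (F l)" unfolding F_def
        using f_cont by (intro continuous_intros) (auto simp: P_def)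
      show "concave_on UNIV (F l)" unfolding concave_on_iff
      proof (intro conjI convex_UNIV ballI allI impI)
        fix y1 y2 :: "real^'m" and u w :: real
        assume uw: "0 \<le> u" "0 \<le> w" "u + w = 1"
        have "(\<Sum>T\<in>P. l T * (u * f T y1 + w * f T y2)) \<le> (\<Sum>T\<in>P. l T * f T (u *\<^sub>R y1 + w *\<^sub>R y2))"
        proof (rule sum_mono)
          fix T assume "T \<in> P"
          then have "concave_on UNIV (f T)" using f_concave by (simp add: P_def)
          then have "u * f T y1 + w * f T y2 \<le> f T (u *\<^sub>R y1 + w *\<^sub>R y2)"
            using uw unfolding concave_on_iff by blast
          then show "l T * (u * f T y1 + w * f T y2) \<le> l T * f T (u *\<^sub>R y1 + w *\<^sub>R y2)"
            using l by (intro mult_left_mono) (auto simp: X_def)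
        qed
        moreover have "(\<Sum>T\<in>P. l T * (u * f T y1 + w * f T y2)) = u * (\<Sum>T\<in>P. l T * f T y1) + w * (\<Sum>T\<in>P. l T * f T y2)"
          by (simp add: algebra_simps sum.distrib sum_distrib_left)
        moreover have "u * v + w * v = v" using uw by (metis distrib_right mult_1)
        ultimately show "u * F l y1 + w * F l y2 \<le> F l (u *\<^sub>R y1 + w *\<^sub>R y2)"
          unfolding F_def by (simp add: algebra_simps)
      qed
    qed
    have Xcomb: "\<forall>a\<in>X. \<forall>b\<in>X. \<forall>t\<in>{0..1}. (\<lambda>i. (1-t) * a i + t * b i) \<in> X"
    proof (intro ballI)
      fix a b t assume a: "a \<in> X" and b: "b \<in> X" and t: "t \<in> {0..1::real}"
      have "(\<Sum>T\<in>P. (1-t) * a T + t * b T) = (1-t) * sum a P + t * sum b P"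
        by (simp add: sum.distrib sum_distrib_left)
      then show "(\<lambda>i. (1-t) * a i + t * b i) \<in> X" using a b t unfolding X_def by auto
    qed
    have Flin: "\<forall>a\<in>X. \<forall>b\<in>X. \<forall>t\<in>{0..1}. \<forall>y. F (\<lambda>i. (1-t) * a i + t * b i) y \<le> (1-t) * F a y + t * F b y"
    proof (intro ballI allI)
      fix a b t y
      have "(\<Sum>T\<in>P. ((1-t) * a T + t * b T) * f T y) = (1-t) * (\<Sum>T\<in>P. a T * f T y) + t * (\<Sum>T\<in>P. b T * f T y)"
        by (simp add: distrib_right sum.distrib sum_distrib_left mult.assoc)
      then show "F (\<lambda>i. (1-t) * a i + t * b i) y \<le> (1-t) * F a y + t * F b y"
        unfolding F_def by (simp add: algebra_simps)
    qed
    obtain l where l: "l \<in> X" "\<forall>y\<in>Y. F l y < 0"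
      using GL[of A Y X F] finP AX hypA conc Xcomb Flin Y_compact Y_convex Y_ne
      unfolding A_def by blast
    define x where "x i = (\<Sum>T\<in>P. l T * ind_vec T i)" for i
    have l0: "\<forall>T. 0 \<le> l T" and l1: "sum l P = 1" using l(1) by (auto simp: X_def)
    have xcube: "x \<in> unit_cube n"
      unfolding unit_cube_def
    proof (intro CollectI conjI ballI allI impI)
      fix i assume i: "i \<in> {1..n}"
      show "0 \<le> x i" unfolding x_def using l0 by (intro sum_nonneg) (auto simp: ind_vec_def)
      have "x i \<le> (\<Sum>T\<in>P. l T)" unfolding x_def using l0
        by (intro sum_mono) (auto simp: ind_vec_def mult_le_cancel_left1)
      then show "x i \<le> 1" using l1 by simp
    next
      fix i assume i: "i \<notin> {1..n}"
      show "x i = 0" unfolding x_def using i by (intro sum.neutral) (auto simp: ind_vec_def P_def)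
    qed
    have lov_lt: "lovasz n (\<lambda>S. f S y) x < v" if y: "y \<in> Y" for y
    proof -
      define j where "j = sort_perm n x"
      have jp: "j permutes {1..n}" unfolding j_def by (rule sort_perm_props)
      define D where "D m = f (j ` {1..Suc m}) y - f (j ` {1..m}) y" for m
      have "lovasz n (\<lambda>S. f S y) x = f {} y + (\<Sum>m<n. x (j (Suc m)) * D m)"
        unfolding lovasz_repr j_def D_def by simp
      also have "(\<Sum>m<n. x (j (Suc m)) * D m) = (\<Sum>T\<in>P. l T * (\<Sum>m<n. ind_vec T (j (Suc m)) * D m))"
        unfolding x_def by (simp add: sum_distrib_left sum_distrib_right mult.assoc sum.swap[of _ P])
      also have "\<dots> \<le> (\<Sum>T\<in>P. l T * (f T y - f {} y))"
      proof (rule sum_mono)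
        fix T assume "T \<in> P"
        then have "(\<Sum>m<n. ind_vec T (j (Suc m)) * D m) \<le> f T y - f {} y"
          unfolding D_def using greedy_le[OF f_submod jp, of T] by (simp add: P_def)
        then show "l T * (\<Sum>m<n. ind_vec T (j (Suc m)) * D m) \<le> l T * (f T y - f {} y)"
          using l0 by (intro mult_left_mono) auto
      qed
      also have "(\<Sum>T\<in>P. l T * (f T y - f {} y)) = (\<Sum>T\<in>P. l T * f T y) - f {} y"
        using l1 by (simp add: algebra_simps sum_subtractf sum_distrib_right[symmetric])
      finally have "lovasz n (\<lambda>S. f S y) x \<le> (\<Sum>T\<in>P. l T * f T y)" by simp
      moreover have "F l y < 0" using l y by blast
      ultimately show ?thesis unfolding F_def by simp
    qed
    obtain y1 where y1: "y1 \<in> Y" "\<forall>y\<in>Y. lovasz n (\<lambda>S. f S y) x \<le> lovasz n (\<lambda>S. f S y1) x"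
      using continuous_attains_sup[OF Y_compact Y_ne continuous_on_subset[OF cont[of x]]] by auto
    have "zeta x \<le> lovasz n (\<lambda>S. f S y1) x" unfolding zeta_def using Y_ne y1 by (intro cSUP_least) auto
    also have "\<dots> < v" using lov_lt y1 by blast
    finally have "zeta x < v" .
    moreover have "v \<le> zeta x" using S(2) xcube unfolding v_def by blast
    ultimately show False by simp
  qed
  then obtain ys where ys: "ys \<in> Y" "\<forall>T. T \<subseteq> {1..n} \<longrightarrow> v \<le> f T ys" by blast
  have le_v: "f S y' \<le> v" if "y' \<in> Y" for y'
    unfolding v_eq using that bddS by (rule cSUP_upper)
  have saddle: "\<exists>S y. S \<subseteq> {1..n} \<and> y \<in> Y \<and>
              (\<forall>y'\<in>Y. f S y' \<le> f S y) \<and> (\<forall>T. T \<subseteq> {1..n} \<longrightarrow> f S y \<le> f T y)"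
  proof (intro exI conjI)
    show "S \<subseteq> {1..n}" "ys \<in> Y" by (fact S(1), fact ys(1))
    show "\<forall>y'\<in>Y. f S y' \<le> f S ys" using le_v ys S(1) by (meson order.trans)
    show "\<forall>T. T \<subseteq> {1..n} \<longrightarrow> f S ys \<le> f T ys" using le_v[OF ys(1)] ys(2) by (meson order.trans)
  qed
  have inf1: "(INF x\<in>unit_cube n. zeta x) = v"
    unfolding v_def using S ind_cube[OF S(1)] by (intro cInf_eq_minimum) auto
  have inf2: "(INF T\<in>Pow {1..n}. zeta (ind_vec T)) = v"
    unfolding v_def using S ind_cube by (intro cInf_eq_minimum) auto
  show ?thesis using saddle inf1 inf2 S ind_cube[OF S(1)] by metis
qed

end
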